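(* Let $H\ge1$, $V$ a finite node set and $r\in V$. Let $\mathcal{A}$ and $\mathcal{P}$ be the hop-constrained tree polytopes defined in the context, and let $\mathcal{A}_X=\{x:\exists y,\ (x,y)\in\mathcal{A}\}$ and $\mathcal{P}_X=\{x:\exists l,g,\ (x,l,g)\in\mathcal{P}\}$ be their projections onto the $x$-variable space. Then $\mathcal{P}_X\subseteq\mathcal{A}_X$.
   Context: Setting: $V$ is the node set of a complete undirected graph, $r\in V$ a root, $H$ the hop limit. For every ordered pair $(u,v)$ of distinct nodes there is a real variable $x_{u,v}$. Common constraints: (X1) $\sum_{u\in V\setminus\{v\}}x_{u,v}\le 1$ for all $v\in V$; (X2) $\sum_{u\in V\setminus\{v,w\}}x_{u,v}\ge x_{v,w}$ for all $v\in V\setminus\{r\}$, $w\in V\setminus\{v\}$; (X3) $0\le x_{u,v}\le 1$ for all arcs. Partial-ordering polytope $\mathcal{P}$: variables $x$ and $l_{v,i},g_{i,v}$ for $v\in V$, $i\in\{0,\dots,H\}$, satisfying (X1)–(X3) and: $l_{r,0}=g_{0,r}=0$; $l_{v,1}=g_{H,v}=0$ for $v\neq r$; $l_{v,i}-l_{v,i+1}\le0$ for $v\in V$, $i=0,\dots,H-1$; $g_{i,v}+l_{v,i+1}=1$ for $v\in V$, $i=0,\dots,H-1$; $l_{u,i}+g_{i,v}\ge x_{u,v}$ for $u\in V$, $v\neq u$, $i=0,\dots,H$; $0\le l_{v,i},g_{i,v}\le1$. Assignment polytope $\mathcal{A}$: variables $x$ and $y_{v,i}$ for $v\in V$, $i\in\{0,\dots,H\}$,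 satisfying (X1)–(X3) and: $y_{r,0}=1$; $y_{r,i}=0$ for $i=1,\dots,H$; $y_{v,0}=0$ for $v\neq r$; $\sum_{i=1}^H y_{v,i}=1$ for $v\neq r$; $y_{u,i}-y_{v,i+1}+x_{u,v}\le1$ for $u\in V$, $v\neq u$, $i=0,\dots,H-1$; $y_{u,H}+x_{u,v}\le 1$ for $u\in V$, $v\neq u$; $0\le y_{v,i}\le 1$. *)

theory Defs
  imports Complex_Main
begin

text \<open>Arc variables x u v for ordered pairs (u,v) of distinct nodes of V;
  values of x outside these pairs are unconstrained (irrelevant).\<close>

definition arc_constraints :: "'a set \<Rightarrow> 'a \<Rightarrow> ('a \<Rightarrow> 'a \<Rightarrow> real) \<Rightarrow> bool" where
  "arc_constraints V r x \<longleftrightarrow>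
     (\<forall>v\<in>V. (\<Sum>u\<in>V - {v}. x u v) \<le> 1) \<and>
     (\<forall>v\<in>V - {r}. \<forall>w\<in>V - {v}. (\<Sum>u\<in>V - {v, w}. x u v) \<ge> x v w) \<and>
     (\<forall>u\<in>V. \<forall>v\<in>V - {u}. 0 \<le> x u v \<and> x u v \<le> 1)"

definition in_P :: "'a set \<Rightarrow> 'a \<Rightarrow> nat \<Rightarrow> ('a \<Rightarrow> 'a \<Rightarrow> real) \<Rightarrow>
    ('a \<Rightarrow> nat \<Rightarrow> real) \<Rightarrow> (nat \<Rightarrow> 'a \<Rightarrow> real) \<Rightarrow> bool" where
  "in_P V r H x l g \<longleftrightarrow>
     arc_constraints V r x \<and>
     l r 0 = 0 \<and> g 0 r = 0 \<and>
     (\<forall>v\<in>V - {r}. l v 1 = 0 \<and> g H v = 0) \<and>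
     (\<forall>v\<in>V. \<forall>i<H. l v i - l v (i + 1) \<le> 0) \<and>
     (\<forall>v\<in>V. \<forall>i<H. g i v + l v (i + 1) = 1) \<and>
     (\<forall>u\<in>V. \<forall>v\<in>V - {u}. \<forall>i\<le>H. l u i + g i v \<ge> x u v) \<and>
     (\<forall>v\<in>V. \<forall>i\<le>H. 0 \<le> l v i \<and> l v i \<le> 1 \<and> 0 \<le> g i v \<and> g i v \<le> 1)"

definition in_A :: "'a set \<Rightarrow> 'a \<Rightarrow> nat \<Rightarrow> ('a \<Rightarrow> 'a \<Rightarrow> real) \<Rightarrow>
    ('a \<Rightarrow> nat \<Rightarrow> real) \<Rightarrow> bool" where
  "in_A V r H x y \<longleftrightarrow>
     arc_constraints V r x \<and>
     y r 0 = 1 \<and>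
     (\<forall>i\<in>{1..H}. y r i = 0) \<and>
     (\<forall>v\<in>V - {r}. y v 0 = 0) \<and>
     (\<forall>v\<in>V - {r}. (\<Sum>i=1..H. y v i) = 1) \<and>
     (\<forall>u\<in>V. \<forall>v\<in>V - {u}. \<forall>i<H. y u i - y v (i + 1) + x u v \<le> 1) \<and>
     (\<forall>u\<in>V. \<forall>v\<in>V - {u}. y u H + x u v \<le> 1) \<and>
     (\<forall>v\<in>V. \<forall>i\<le>H. 0 \<le> y v i \<and> y v i \<le> 1)"

definition proj_P :: "'a set \<Rightarrow> 'a \<Rightarrow> nat \<Rightarrow> ('a \<Rightarrow> 'a \<Rightarrow> real) set" where
  "proj_P V r H = {x. \<exists>l g. in_P V r H x l g}"

definition proj_A :: "'a set \<Rightarrow> 'a \<Rightarrow> nat \<Rightarrow> ('a \<Rightarrow> 'a \<Rightarrow> real) set" where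
  "proj_A V r H = {x. \<exists>y. in_A V r H x y}"

end

theory Submission
  imports Defs "HOL-Analysis.Brouwer_Fixpoint"
begin


lemma approx_fix_nat:
  fixes g :: "(nat \<Rightarrow> real) \<Rightarrow> nat \<Rightarrow> real" and L e :: real
  assumes cube: "\<And>z i. i < n \<Longrightarrow> 0 \<le> g z i \<and> g z i \<le> 1"
    and lip: "\<And>z z' i. i < n \<Longrightarrow> \<bar>g z i - g z' i\<bar> \<le> L * (\<Sum>j<n. \<bar>z j - z' j\<bar>)"
    and L: "L \<ge> 0" and e: "e > 0"
  shows "\<exists>z. (\<forall>i<n. 0 \<le> z i \<and> z i \<le> 1) \<and> (\<forall>i<n. \<bar>g z i - z i\<bar> \<le> e)"
proof -
  obtain p :: nat where p: "(1 + L * real n) / e \<le> real p"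
    using real_arch_simple by blast
  define pp where "pp = Suc p"
  have pp0: "0 < pp" by (simp add: pp_def)
  have pe: "(1 + L * real n) / real pp \<le> e"
  proof -
    have "(1 + L * real n) / e < real pp" using p by (simp add: pp_def)
    then have "1 + L * real n < real pp * e" using e by (simp add: divide_less_eq mult.commute)
    then show ?thesis using pp0 by (simp add: divide_le_eq mult.commute)
  qed
  define pt :: "(nat \<Rightarrow> nat) \<Rightarrow> nat \<Rightarrow> real" where "pt x = (\<lambda>i. real (x i) / real pp)" for x
  define label :: "(nat \<Rightarrow> nat) \<Rightarrow> nat \<Rightarrow> nat" where
    "label x i = (if x i = 0 then 0 else if x i = pp then 1 else if pt x i \<le> g (pt x) i then 0 else 1)" for x i
  have l0: "pt x i \<le> g (pt x) i" if "label x i = 0" "i < n" for x i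
    using that cube[of i "pt x"] pp0 by (auto simp: label_def pt_def split: if_splits)
  have l1: "g (pt x) i \<le> pt x i" if "label x i \<noteq> 0" "i < n" for x i
    using that cube[of i "pt x"] pp0 by (auto simp: label_def pt_def split: if_splits)
  have c1: "\<forall>x. (\<forall>i<n. x i \<le> pp) \<longrightarrow> (\<forall>i<n. label x i = 0 \<or> label x i = 1)"
    by (auto simp: label_def)
  have c2: "\<forall>x. (\<forall>i<n. x i \<le> pp) \<longrightarrow> (\<forall>i<n. x i = 0 \<longrightarrow> label x i = 0)"
    by (auto simp: label_def)
  have c3: "\<forall>x. (\<forall>i<n. x i \<le> pp) \<longrightarrow> (\<forall>i<n. x i = pp \<longrightarrow> label x i = 1)"
    using pp0 by (auto simp: label_def)
  obtain q where q1: "\<forall>i<n. q i < pp"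
    and q2: "\<forall>i<n. \<exists>r s. (\<forall>j<n. q j \<le> r j \<and> r j \<le> q j + 1) \<and>
               (\<forall>j<n. q j \<le> s j \<and> s j \<le> q j + 1) \<and> label r i \<noteq> label s i"
    using kuhn_lemma[OF pp0 c1 c2 c3] by blast
  have absdiv: "\<bar>pt r j - pt q j\<bar> \<le> 1 / real pp" if "\<bar>real (r j) - real (q j)\<bar> \<le> 1" for r q j
  proof -
    have "pt r j - pt q j = (real (r j) - real (q j)) / real pp"
      unfolding pt_def by (rule diff_divide_distrib[symmetric])
    then have "\<bar>pt r j - pt q j\<bar> = \<bar>real (r j) - real (q j)\<bar> / real pp"
      using pp0 by simp
    then show ?thesis using that pp0 by (simp add: divide_right_mono)
  qed
  have dist: "(\<Sum>j<n. \<bar>pt r j - pt q j\<bar>) \<le> real n / real pp"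
    if "\<forall>j<n. q j \<le> r j \<and> r j \<le> q j + 1" for r
  proof -
    have "(\<Sum>j<n. \<bar>pt r j - pt q j\<bar>) \<le> (\<Sum>j<n. 1 / real pp)"
    proof (rule sum_mono)
      fix j assume "j \<in> {..<n}"
      then have "q j \<le> r j" "r j \<le> q j + 1" using that by auto
      then have "\<bar>real (r j) - real (q j)\<bar> \<le> 1" by auto
      then show "\<bar>pt r j - pt q j\<bar> \<le> 1 / real pp"
        using absdiv by blast
    qed
    then show ?thesis by simp
  qed
  have close: "\<bar>g (pt r) i - g (pt q) i\<bar> \<le> L * real n / real pp"
    if "\<forall>j<n. q j \<le> r j \<and> r j \<le> q j + 1" "i < n" for r i
  proof -
    have "\<bar>g (pt r) i - g (pt q) i\<bar> \<le> L * (\<Sum>j<n. \<bar>pt r j - pt q j\<bar>)" using lip that(2) by blast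
    also have "\<dots> \<le> L * (real n / real pp)" using dist[OF that(1)] L by (rule mult_left_mono)
    finally show ?thesis by simp
  qed
  have near: "\<bar>pt r i - pt q i\<bar> \<le> 1 / real pp"
    if "\<forall>j<n. q j \<le> r j \<and> r j \<le> q j + 1" "i < n" for r i
  proof -
    have "q i \<le> r i" "r i \<le> q i + 1" using that by auto
    then have "\<bar>real (r i) - real (q i)\<bar> \<le> 1" by auto
    then show ?thesis using absdiv by blast
  qed
  show ?thesis
  proof (intro exI conjI allI impI)
    fix i assume i: "i < n"
    show "0 \<le> pt q i" by (simp add: pt_def)
    show "pt q i \<le> 1" using q1 i pp0 by (simp add: pt_def less_imp_le)
  next
    fix i assume i: "i < n"
    obtain r s where r: "\<forall>j<n. q j \<le> r j \<and> r j \<le> q j + 1"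
      and s: "\<forall>j<n. q j \<le> s j \<and> s j \<le> q j + 1" and lab: "label r i \<noteq> label s i"
      using q2 i by blast
    have cr: "\<bar>g (pt r) i - g (pt q) i\<bar> \<le> L * real n / real pp" using close[OF r i] .
    have cs: "\<bar>g (pt s) i - g (pt q) i\<bar> \<le> L * real n / real pp" using close[OF s i] .
    have nr: "\<bar>pt r i - pt q i\<bar> \<le> 1 / real pp" using near[OF r i] .
    have ns: "\<bar>pt s i - pt q i\<bar> \<le> 1 / real pp" using near[OF s i] .
    have rq: "pt q i \<le> pt r i" "pt q i \<le> pt s i" using r s i pp0
      by (auto simp: pt_def divide_right_mono)
    have key: "\<bar>g (pt q) i - pt q i\<bar> \<le> 1 / real pp + L * real n / real pp"
    proof (cases "label r i = 0")
      case True
      then have "label s i \<noteq> 0" using lab by simp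
      then have a: "g (pt s) i \<le> pt s i" using l1 i by blast
      have b: "pt r i \<le> g (pt r) i" using l0 True i by blast
      show ?thesis using a b cr cs nr ns rq by (simp add: abs_le_iff; linarith)
    next
      case False
      then have a: "g (pt r) i \<le> pt r i" using l1 i by blast
      have "label s i = 0 \<or> label s i \<noteq> 0" by blast
      then have b: "pt s i \<le> g (pt s) i"
      proof
        assume "label s i = 0" then show ?thesis using l0 i by blast
      next
        assume "label s i \<noteq> 0"
        then have "label s i = 1" "label r i = 1" using False by (auto simp: label_def split: if_splits)
        then show ?thesis using lab by simp
      qed
      show ?thesis using a b cr cs nr ns rq by (simp add: abs_le_iff; linarith)
    qed
    have "1 / real pp + L * real n / real pp = (1 + L * real n) / real pp"
      by (simp add: add_divide_distrib)
    then show "\<bar>g (pt q) i - pt q i\<bar> \<le> e" using key pe by linarith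
  qed
qed

lemma bw_cube:
  fixes s :: "nat \<Rightarrow> nat \<Rightarrow> real"
  assumes "\<And>k i. i < n \<Longrightarrow> 0 \<le> s k i \<and> s k i \<le> 1"
  shows "\<exists>r z. strict_mono r \<and> (\<forall>i<n. (\<lambda>k. s (r k) i) \<longlonglongrightarrow> z i)"
  using assms
proof (induction n)
  case 0
  then show ?case by (intro exI[of _ id]) (auto simp: strict_mono_def)
next
  case (Suc n)
  then obtain r z where r: "strict_mono r" and z: "\<forall>i<n. (\<lambda>k. s (r k) i) \<longlonglongrightarrow> z i"
    by (metis less_SucI)
  define t where "t k = s (r k) n" for k
  obtain f where f: "strict_mono f" and mf: "monoseq (\<lambda>k. t (f k))"
    using seq_monosub by blast
  have "Bseq (\<lambda>k. t (f k))"
    using Suc.prems[of n] by (intro BseqI'[of _ 1]) (auto simp: t_def)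
  then have "convergent (\<lambda>k. t (f k))" using mf Bseq_monoseq_convergent by blast
  then obtain a where a: "(\<lambda>k. t (f k)) \<longlonglongrightarrow> a" by (auto simp: convergent_def)
  show ?case
  proof (intro exI conjI allI impI)
    show "strict_mono (r \<circ> f)" using r f by (rule strict_mono_o)
    fix i assume "i < Suc n"
    show "(\<lambda>k. s ((r \<circ> f) k) i) \<longlonglongrightarrow> (z(n := a)) i"
    proof (cases "i = n")
      case True then show ?thesis using a by (simp add: t_def)
    next
      case False
      then have "i < n" using \<open>i < Suc n\<close> by simp
      then have "((\<lambda>k. s (r k) i) \<circ> f) \<longlonglongrightarrow> z i" using z f LIMSEQ_subseq_LIMSEQ by blast
      then show ?thesis using False by (simp add: o_def)
    qed
  qed
qed

lemma fix_nat:
  fixes g :: "(nat \<Rightarrow> real) \<Rightarrow> nat \<Rightarrow> real" and L :: real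
  assumes cube: "\<And>z i. i < n \<Longrightarrow> 0 \<le> g z i \<and> g z i \<le> 1"
    and lip: "\<And>z z' i. i < n \<Longrightarrow> \<bar>g z i - g z' i\<bar> \<le> L * (\<Sum>j<n. \<bar>z j - z' j\<bar>)"
    and L: "L \<ge> 0"
  shows "\<exists>z. (\<forall>i<n. 0 \<le> z i \<and> z i \<le> 1) \<and> (\<forall>i<n. g z i = z i)"
proof -
  have "\<forall>k. \<exists>z. (\<forall>i<n. 0 \<le> z i \<and> z i \<le> 1) \<and> (\<forall>i<n. \<bar>g z i - z i\<bar> \<le> 1 / real (Suc k))"
  proof
    fix k
    show "\<exists>z. (\<forall>i<n. 0 \<le> z i \<and> z i \<le> 1) \<and> (\<forall>i<n. \<bar>g z i - z i\<bar> \<le> 1 / real (Suc k))"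
      by (rule approx_fix_nat[OF cube lip L]) auto
  qed
  then have "\<exists>zs. \<forall>k. (\<forall>i<n. 0 \<le> zs k i \<and> zs k i \<le> 1) \<and> (\<forall>i<n. \<bar>g (zs k) i - zs k i\<bar> \<le> 1 / real (Suc k))"
    by (rule choice)
  then obtain zs where zs: "\<forall>k. (\<forall>i<n. 0 \<le> zs k i \<and> zs k i \<le> 1) \<and> (\<forall>i<n. \<bar>g (zs k) i - zs k i\<bar> \<le> 1 / real (Suc k))"
    by blast
  have zs1: "\<And>k i. i < n \<Longrightarrow> 0 \<le> zs k i \<and> zs k i \<le> 1" using zs by blast
  have zs2: "\<And>k i. i < n \<Longrightarrow> \<bar>g (zs k) i - zs k i\<bar> \<le> 1 / real (Suc k)" using zs by blast
  obtain \<rho> z where \<rho>: "strict_mono \<rho>" and conv: "\<forall>i<n. (\<lambda>k. zs (\<rho> k) i) \<longlonglongrightarrow> z i"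
    using bw_cube[of n zs] zs1 by blast
  show ?thesis
  proof (intro exI conjI allI impI)
    fix i assume i: "i < n"
    have c: "(\<lambda>k. zs (\<rho> k) i) \<longlonglongrightarrow> z i" using conv i by blast
    show "0 \<le> z i" by (rule LIMSEQ_le_const[OF c]) (use zs1 i in auto)
    show "z i \<le> 1" by (rule LIMSEQ_le_const2[OF c]) (use zs1 i in auto)
  next
    fix i assume i: "i < n"
    have c: "(\<lambda>k. zs (\<rho> k) i) \<longlonglongrightarrow> z i" using conv i by blast
    have bnd: "(\<lambda>k. L * (\<Sum>j<n. \<bar>zs (\<rho> k) j - z j\<bar>)) \<longlonglongrightarrow> L * (\<Sum>j<n. \<bar>z j - z j\<bar>)"
      using conv by (intro tendsto_intros) auto
    then have bnd0: "(\<lambda>k. L * (\<Sum>j<n. \<bar>zs (\<rho> k) j - z j\<bar>)) \<longlonglongrightarrow> 0" by simp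
    have "(\<lambda>k. g (zs (\<rho> k)) i - g z i) \<longlonglongrightarrow> 0"
    proof (rule Lim_null_comparison[OF _ bnd0])
      show "\<forall>\<^sub>F k in sequentially. norm (g (zs (\<rho> k)) i - g z i) \<le> L * (\<Sum>j<n. \<bar>zs (\<rho> k) j - z j\<bar>)"
        using lip[OF i] by simp
    qed
    then have A: "(\<lambda>k. g (zs (\<rho> k)) i) \<longlonglongrightarrow> g z i" by (rule LIM_zero_cancel)
    have inv0: "(\<lambda>k. 1 / real (Suc (\<rho> k))) \<longlonglongrightarrow> 0"
    proof -
      have "(\<lambda>k. inverse (real (Suc k))) \<longlonglongrightarrow> 0" by (rule LIMSEQ_inverse_real_of_nat)
      then have "((\<lambda>k. inverse (real (Suc k))) \<circ> \<rho>) \<longlonglongrightarrow> 0" using \<rho> by (rule LIMSEQ_subseq_LIMSEQ)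
      then show ?thesis by (simp add: o_def inverse_eq_divide)
    qed
    have B: "(\<lambda>k. g (zs (\<rho> k)) i - zs (\<rho> k) i) \<longlonglongrightarrow> 0"
    proof (rule Lim_null_comparison[OF _ inv0])
      show "\<forall>\<^sub>F k in sequentially. norm (g (zs (\<rho> k)) i - zs (\<rho> k) i) \<le> 1 / real (Suc (\<rho> k))"
        using zs2[OF i] by simp
    qed
    have "(\<lambda>k. g (zs (\<rho> k)) i - zs (\<rho> k) i) \<longlonglongrightarrow> g z i - z i"
      using A c by (rule tendsto_diff)
    then have "g z i - z i = 0" using B by (rule LIMSEQ_unique)
    then show "g z i = z i" by simp
  qed
qed

lemma fix_set:
  fixes f :: "('a \<Rightarrow> real) \<Rightarrow> 'a \<Rightarrow> real" and L :: real
  assumes W: "finite W"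
    and cube: "\<And>b v. v \<in> W \<Longrightarrow> 0 \<le> f b v \<and> f b v \<le> 1"
    and lip: "\<And>b b' v. v \<in> W \<Longrightarrow> \<bar>f b v - f b' v\<bar> \<le> L * (\<Sum>u\<in>W. \<bar>b u - b' u\<bar>)"
    and L: "L \<ge> 0"
  shows "\<exists>b. (\<forall>v\<in>W. 0 \<le> b v \<and> b v \<le> 1) \<and> (\<forall>v\<in>W. f b v = b v)"
proof -
  define n where "n = card W"
  obtain e where e: "bij_betw e {..<n} W"
    using ex_bij_betw_nat_finite[OF W] unfolding n_def atLeast0LessThan by blast
  define ie where "ie = inv_into {..<n} e"
  have ie: "bij_betw ie W {..<n}" unfolding ie_def by (rule bij_betw_inv_into[OF e])
  have eie: "e (ie v) = v" if "v \<in> W" for v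
    unfolding ie_def using e that by (simp add: bij_betw_inv_into_right)
  have ieW: "ie v < n" if "v \<in> W" for v using ie that by (auto simp: bij_betw_def)
  have eW: "e i \<in> W" if "i < n" for i using e that by (auto simp: bij_betw_def)
  define G where "G z i = f (\<lambda>v. z (ie v)) (e i)" for z i
  have G1: "0 \<le> G z i \<and> G z i \<le> 1" if "i < n" for z i
    unfolding G_def by (rule cube[OF eW[OF that]])
  have G2: "\<bar>G z i - G z' i\<bar> \<le> L * (\<Sum>j<n. \<bar>z j - z' j\<bar>)" if "i < n" for z z' i
  proof -
    have "\<bar>G z i - G z' i\<bar> \<le> L * (\<Sum>u\<in>W. \<bar>z (ie u) - z' (ie u)\<bar>)"
      unfolding G_def by (rule lip[OF eW[OF that]])
    also have "(\<Sum>u\<in>W. \<bar>z (ie u) - z' (ie u)\<bar>) = (\<Sum>j<n. \<bar>z j - z' j\<bar>)"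
      using sum.reindex_bij_betw[OF ie, of "\<lambda>j. \<bar>z j - z' j\<bar>"] by simp
    finally show ?thesis .
  qed
  obtain z where z1: "\<forall>i<n. 0 \<le> z i \<and> z i \<le> 1" and z2: "\<forall>i<n. G z i = z i"
  proof -
    have "\<exists>z. (\<forall>i<n. 0 \<le> z i \<and> z i \<le> 1) \<and> (\<forall>i<n. G z i = z i)"
      by (rule fix_nat[where g=G and L=L and n=n]) (fact G1, fact G2, fact L)
    then show ?thesis using that by blast
  qed
  show ?thesis
  proof (intro exI conjI ballI)
    fix v assume v: "v \<in> W"
    show "0 \<le> z (ie v)" "z (ie v) \<le> 1" using z1 ieW[OF v] by auto
    have "G z (ie v) = z (ie v)" using z2 ieW[OF v] by blast
    then show "f (\<lambda>v. z (ie v)) v = z (ie v)" unfolding G_def using eie[OF v] by simp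
  qed
qed



primrec Fl :: "('a \<Rightarrow> 'a \<Rightarrow> real) \<Rightarrow> 'a set \<Rightarrow> ('a \<Rightarrow> real) \<Rightarrow> nat \<Rightarrow> 'a \<Rightarrow> real" where
  "Fl x W b 0 v = b v"
| "Fl x W b (Suc k) v = Max (insert 0 ((\<lambda>u. Fl x W b k u - (1 - x u v)) ` (W - {v})))"

declare Fl.simps(2)[simp del]

definition Tsum :: "('a \<Rightarrow> 'a \<Rightarrow> real) \<Rightarrow> 'a set \<Rightarrow> nat \<Rightarrow> ('a \<Rightarrow> real) \<Rightarrow> 'a \<Rightarrow> real" where
  "Tsum x W H b v = (\<Sum>j<H - 1. Fl x W b (Suc j) v)"

definition Phi :: "('a \<Rightarrow> 'a \<Rightarrow> real) \<Rightarrow> 'a \<Rightarrow> 'a set \<Rightarrow> nat \<Rightarrow> ('a \<Rightarrow> real) \<Rightarrow> 'a \<Rightarrow> real" where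
  "Phi x r W H b v = max (x r v) (1 - Tsum x W H b v)"

lemma Fl_nonneg: "finite W \<Longrightarrow> 0 \<le> Fl x W b (Suc k) v"
  unfolding Fl.simps(2) by (simp add: Max_ge_iff)

lemma Fl_step: "finite W \<Longrightarrow> u \<in> W - {v} \<Longrightarrow> Fl x W b k u - (1 - x u v) \<le> Fl x W b (Suc k) v"
  unfolding Fl.simps(2) by (simp add: Max_ge_iff)

lemma Fl_le:
  assumes "finite W" "0 \<le> M" "\<And>u. u \<in> W - {v} \<Longrightarrow> Fl x W b k u - (1 - x u v) \<le> M"
  shows "Fl x W b (Suc k) v \<le> M"
  using assms unfolding Fl.simps(2) by (simp add: Max_le_iff)

lemma Fl_lip:
  assumes W: "finite W" and v: "v \<in> W"
  shows "\<bar>Fl x W b k v - Fl x W b' k v\<bar> \<le> (\<Sum>u\<in>W. \<bar>b u - b' u\<bar>)"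
  using v
proof (induction k arbitrary: v)
  case 0
  then show ?case using member_le_sum[of v W "\<lambda>u. \<bar>b u - b' u\<bar>"] W by simp
next
  case (Suc k)
  define D where "D = (\<Sum>u\<in>W. \<bar>b u - b' u\<bar>)"
  have D0: "0 \<le> D" unfolding D_def by (simp add: sum_nonneg)
  have a: "Fl x W b (Suc k) v \<le> Fl x W b' (Suc k) v + D"
  proof (rule Fl_le[OF W])
    show "0 \<le> Fl x W b' (Suc k) v + D" using Fl_nonneg[OF W] D0 by (simp add: add_nonneg_nonneg)
    fix u assume u: "u \<in> W - {v}"
    have "Fl x W b k u \<le> Fl x W b' k u + D" using Suc.IH[of u] u unfolding D_def by auto
    moreover have "Fl x W b' k u - (1 - x u v) \<le> Fl x W b' (Suc k) v" by (rule Fl_step[OF W u])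
    ultimately show "Fl x W b k u - (1 - x u v) \<le> Fl x W b' (Suc k) v + D" by linarith
  qed
  have b: "Fl x W b' (Suc k) v \<le> Fl x W b (Suc k) v + D"
  proof (rule Fl_le[OF W])
    show "0 \<le> Fl x W b (Suc k) v + D" using Fl_nonneg[OF W] D0 by (simp add: add_nonneg_nonneg)
    fix u assume u: "u \<in> W - {v}"
    have "Fl x W b' k u \<le> Fl x W b k u + D" using Suc.IH[of u] u unfolding D_def by auto
    moreover have "Fl x W b k u - (1 - x u v) \<le> Fl x W b (Suc k) v" by (rule Fl_step[OF W u])
    ultimately show "Fl x W b' k u - (1 - x u v) \<le> Fl x W b (Suc k) v + D" by linarith
  qed
  show ?case using a b unfolding D_def by linarith
qed

lemma Phi_lip:
  assumes W: "finite W" and v: "v \<in> W"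
  shows "\<bar>Phi x r W H b v - Phi x r W H b' v\<bar> \<le> real H * (\<Sum>u\<in>W. \<bar>b u - b' u\<bar>)"
proof -
  define D where "D = (\<Sum>u\<in>W. \<bar>b u - b' u\<bar>)"
  have D0: "0 \<le> D" unfolding D_def by (simp add: sum_nonneg)
  have "\<bar>Tsum x W H b v - Tsum x W H b' v\<bar> = \<bar>\<Sum>j<H - 1. Fl x W b (Suc j) v - Fl x W b' (Suc j) v\<bar>"
    unfolding Tsum_def by (simp add: sum_subtractf)
  also have "\<dots> \<le> (\<Sum>j<H - 1. \<bar>Fl x W b (Suc j) v - Fl x W b' (Suc j) v\<bar>)" by (rule sum_abs)
  also have "\<dots> \<le> (\<Sum>j<H - 1. D)" unfolding D_def by (rule sum_mono) (rule Fl_lip[OF W v])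
  also have "\<dots> = real (H - 1) * D" by simp
  also have "\<dots> \<le> real H * D" using D0 by (intro mult_right_mono) auto
  finally have T: "\<bar>Tsum x W H b v - Tsum x W H b' v\<bar> \<le> real H * D" .
  have "\<bar>Phi x r W H b v - Phi x r W H b' v\<bar> \<le> \<bar>Tsum x W H b v - Tsum x W H b' v\<bar>"
    unfolding Phi_def by (simp add: max_def abs_le_iff; linarith)
  then show ?thesis using T unfolding D_def by linarith
qed

lemma posum:
  fixes a :: "nat \<Rightarrow> real"
  assumes "finite S" "\<And>j. j \<in> S \<Longrightarrow> 0 \<le> a j" "(\<Sum>j\<in>S. a j) \<le> 1" "0 \<le> c" "c \<le> 1"
  shows "(\<Sum>j\<in>S. max 0 (a j - c)) \<le> 1 - c"
proof -
  define S' where "S' = {j \<in> S. c < a j}"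
  have fin: "finite S'" using assms(1) unfolding S'_def by simp
  have "(\<Sum>j\<in>S. max 0 (a j - c)) = (\<Sum>j\<in>S'. max 0 (a j - c))"
    by (rule sum.mono_neutral_right[OF assms(1)]) (auto simp: S'_def)
  also have "\<dots> = (\<Sum>j\<in>S'. a j - c)" unfolding S'_def by (rule sum.cong) auto
  finally have eq: "(\<Sum>j\<in>S. max 0 (a j - c)) = (\<Sum>j\<in>S'. a j - c)" .
  show ?thesis
  proof (cases "S' = {}")
    case True
    then show ?thesis using eq assms(5) by simp
  next
    case False
    then have "1 \<le> card S'" using fin by (simp add: Suc_le_eq card_gt_0_iff)
    then have "c \<le> real (card S') * c" using assms(4) by (simp add: mult_le_cancel_right1)
    moreover have "(\<Sum>j\<in>S'. a j) \<le> (\<Sum>j\<in>S. a j)"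
      by (rule sum_mono2[OF assms(1)]) (use assms(2) in \<open>auto simp: S'_def\<close>)
    moreover have "(\<Sum>j\<in>S'. a j - c) = (\<Sum>j\<in>S'. a j) - real (card S') * c"
      by (simp add: sum_subtractf)
    ultimately show ?thesis using eq assms(3) by linarith
  qed
qed

theorem theorem2:
  fixes V :: "'a set" and r :: 'a and H :: nat
  assumes "H \<ge> 1" and "finite V" and "r \<in> V"
  shows "proj_P V r H \<subseteq> proj_A V r H"
proof
  fix x assume "x \<in> proj_P V r H"
  then obtain l g where P: "in_P V r H x l g" by (auto simp: proj_P_def)
  have AC: "arc_constraints V r x" using P unfolding in_P_def by blast
  have X1: "\<forall>v\<in>V. (\<Sum>u\<in>V - {v}. x u v) \<le> 1"
    and X3: "\<forall>u\<in>V. \<forall>v\<in>V - {u}. 0 \<le> x u v \<and> x u v \<le> 1"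
    using AC unfolding arc_constraints_def by blast+
  have g0: "g 0 r = 0"
    and lg: "\<forall>v\<in>V - {r}. l v 1 = 0 \<and> g H v = 0"
    and lmono: "\<forall>v\<in>V. \<forall>i<H. l v i - l v (i + 1) \<le> 0"
    and gl: "\<forall>v\<in>V. \<forall>i<H. g i v + l v (i + 1) = 1"
    and cov: "\<forall>u\<in>V. \<forall>v\<in>V - {u}. \<forall>i\<le>H. l u i + g i v \<ge> x u v"
    and bnd: "\<forall>v\<in>V. \<forall>i\<le>H. 0 \<le> l v i \<and> l v i \<le> 1 \<and> 0 \<le> g i v \<and> g i v \<le> 1"
    using P unfolding in_P_def by blast+
  define W where "W = V - {r}"
  have W: "finite W" unfolding W_def using assms(2) by simp
  have WV: "\<And>v. v \<in> W \<Longrightarrow> v \<in> V" and Wr: "\<And>v. v \<in> W \<Longrightarrow> v \<noteq> r"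
    unfolding W_def by auto
  have H0: "0 < H" using assms(1) by simp
  have xr: "0 \<le> x r v \<and> x r v \<le> 1" if "v \<in> W" for v
    using X3 assms(3) that unfolding W_def by blast
  have xuv: "0 \<le> x u v \<and> x u v \<le> 1" if "u \<in> V" "v \<in> V" "u \<noteq> v" for u v
    using X3 that by blast
  have xur: "x u r = 0" if u: "u \<in> W" for u
  proof -
    have "l u 0 + g 0 r \<ge> x u r" using cov WV[OF u] assms(3) Wr[OF u] by blast
    moreover have "l u 0 - l u (0 + 1) \<le> 0" using lmono WV[OF u] H0 by blast
    moreover have "l u 1 = 0" using lg u unfolding W_def by blast
    moreover have "0 \<le> x u r" using xuv[OF WV[OF u] assms(3) Wr[OF u]] by blast
    ultimately show ?thesis using g0 by simp
  qed
  have X1': "x r v + (\<Sum>u\<in>W - {v}. x u v) \<le> 1" if v: "v \<in> W" for v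
  proof -
    have "V - {v} = insert r (W - {v})" using v assms(3) unfolding W_def by auto
    moreover have "r \<notin> W - {v}" unfolding W_def by simp
    ultimately have "(\<Sum>u\<in>V - {v}. x u v) = x r v + (\<Sum>u\<in>W - {v}. x u v)"
      using W by simp
    moreover have "(\<Sum>u\<in>V - {v}. x u v) \<le> 1" using X1 WV[OF v] by blast
    ultimately show ?thesis by linarith
  qed
  have Tnn: "0 \<le> Tsum x W H b v" for b v
    unfolding Tsum_def by (rule sum_nonneg) (rule Fl_nonneg[OF W])
  obtain b where b01: "\<forall>v\<in>W. 0 \<le> b v \<and> b v \<le> 1" and bfix: "\<forall>v\<in>W. Phi x r W H b v = b v"
  proof -
    have "\<exists>b. (\<forall>v\<in>W. 0 \<le> b v \<and> b v \<le> 1) \<and> (\<forall>v\<in>W. Phi x r W H b v = b v)"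
    proof (rule fix_set[OF W, where L = "real H"])
      fix b v assume v: "v \<in> W"
      show "0 \<le> Phi x r W H b v \<and> Phi x r W H b v \<le> 1"
        unfolding Phi_def using xr[OF v] Tnn[of b v] by auto
    next
      fix b b' v assume v: "v \<in> W"
      show "\<bar>Phi x r W H b v - Phi x r W H b' v\<bar> \<le> real H * (\<Sum>u\<in>W. \<bar>b u - b' u\<bar>)"
        by (rule Phi_lip[OF W v])
    qed simp
    then show ?thesis using that by blast
  qed
  have Fnn: "0 \<le> Fl x W b k v" if "v \<in> W" for k v
  proof (cases k)
    case 0 then show ?thesis using b01 that by simp
  next
    case (Suc k') then show ?thesis using Fl_nonneg[OF W] by simp
  qed
  have F2: "\<forall>v\<in>W. Fl x W b k v \<le> 1 - l v (Suc k)" if "k < H" for k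
    using that
  proof (induction k)
    case 0
    show ?case using b01 lg unfolding W_def by simp
  next
    case (Suc k)
    show ?case
    proof
      fix v assume v: "v \<in> W"
      show "Fl x W b (Suc k) v \<le> 1 - l v (Suc (Suc k))"
      proof (rule Fl_le[OF W])
        show "0 \<le> 1 - l v (Suc (Suc k))" using bnd WV[OF v] Suc.prems by simp
        fix u assume u: "u \<in> W - {v}"
        have uV: "u \<in> V" "u \<noteq> v" using u WV by auto
        have "Fl x W b k u \<le> 1 - l u (Suc k)" using Suc.IH Suc.prems u by auto
        moreover have "l u (Suc k) + g (Suc k) v \<ge> x u v"
          using cov uV WV[OF v] Suc.prems by auto
        moreover have "g (Suc k) v + l v (Suc k + 1) = 1"
          using gl WV[OF v] Suc.prems by blast
        ultimately show "Fl x W b k u - (1 - x u v) \<le> 1 - l v (Suc (Suc k))" by simp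
      qed
    qed
  qed
  have Claim: "\<forall>v\<in>W. (\<Sum>j<m. Fl x W b (Suc j) v) \<le> (\<Sum>u\<in>W - {v}. x u v)" if "m \<le> H - 1" for m
    using that
  proof (induction m)
    case 0
    show ?case
    proof
      fix v assume v: "v \<in> W"
      show "(\<Sum>j<0. Fl x W b (Suc j) v) \<le> (\<Sum>u\<in>W - {v}. x u v)"
        using xuv WV v by (auto intro!: sum_nonneg)
    qed
  next
    case (Suc m)
    have IH: "\<forall>v\<in>W. (\<Sum>j<m. Fl x W b (Suc j) v) \<le> (\<Sum>u\<in>W - {v}. x u v)"
      using Suc.IH Suc.prems by simp
    have Part: "(\<Sum>j<Suc m. Fl x W b j u) \<le> 1" if u: "u \<in> W" for u
    proof -
      have eq: "(\<Sum>j<Suc m. Fl x W b j u) = b u + (\<Sum>j<m. Fl x W b (Suc j) u)"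
        unfolding sum.lessThan_Suc_shift by simp
      have bu: "b u = max (x r u) (1 - Tsum x W H b u)" using bfix u unfolding Phi_def by simp
      show ?thesis
      proof (cases "x r u \<le> 1 - Tsum x W H b u")
        case True
        have "(\<Sum>j<m. Fl x W b (Suc j) u) \<le> (\<Sum>j<H - 1. Fl x W b (Suc j) u)"
          by (rule sum_mono2) (use Suc.prems Fl_nonneg[OF W] in auto)
        then show ?thesis using eq bu True unfolding Tsum_def by simp
      next
        case False
        then have "b u = x r u" using bu by simp
        moreover have "(\<Sum>j<m. Fl x W b (Suc j) u) \<le> (\<Sum>w\<in>W - {u}. x w u)" using IH u by blast
        ultimately show ?thesis using eq X1'[OF u] by linarith
      qed
    qed
    show ?case
    proof
      fix v assume v: "v \<in> W"
      have "(\<Sum>j<Suc m. Fl x W b (Suc j) v) \<le>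
            (\<Sum>j<Suc m. \<Sum>u\<in>W - {v}. max 0 (Fl x W b j u - (1 - x u v)))"
      proof (rule sum_mono)
        fix j assume "j \<in> {..<Suc m}"
        show "Fl x W b (Suc j) v \<le> (\<Sum>u\<in>W - {v}. max 0 (Fl x W b j u - (1 - x u v)))"
        proof (rule Fl_le[OF W])
          show "0 \<le> (\<Sum>u\<in>W - {v}. max 0 (Fl x W b j u - (1 - x u v)))" by (rule sum_nonneg) simp
          fix u assume u: "u \<in> W - {v}"
          have "max 0 (Fl x W b j u - (1 - x u v)) \<le> (\<Sum>u\<in>W - {v}. max 0 (Fl x W b j u - (1 - x u v)))"
            by (rule member_le_sum[OF u]) (use W in auto)
          then show "Fl x W b j u - (1 - x u v) \<le> (\<Sum>u\<in>W - {v}. max 0 (Fl x W b j u - (1 - x u v)))"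
            by linarith
        qed
      qed
      also have "\<dots> = (\<Sum>u\<in>W - {v}. \<Sum>j<Suc m. max 0 (Fl x W b j u - (1 - x u v)))"
        by (rule sum.swap)
      also have "\<dots> \<le> (\<Sum>u\<in>W - {v}. 1 - (1 - x u v))"
      proof (rule sum_mono)
        fix u assume u: "u \<in> W - {v}"
        have uW: "u \<in> W" using u by simp
        have "x u v \<ge> 0" "x u v \<le> 1" using xuv[of u v] u WV v by auto
        then show "(\<Sum>j<Suc m. max 0 (Fl x W b j u - (1 - x u v))) \<le> 1 - (1 - x u v)"
          by (intro posum) (use Fnn[OF uW] Part[OF uW] in auto)
      qed
      also have "\<dots> = (\<Sum>u\<in>W - {v}. x u v)" by simp
      finally show "(\<Sum>j<Suc m. Fl x W b (Suc j) v) \<le> (\<Sum>u\<in>W - {v}. x u v)" .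
    qed
  qed
  have bval: "b v = 1 - Tsum x W H b v" if v: "v \<in> W" for v
  proof -
    have "Tsum x W H b v \<le> (\<Sum>u\<in>W - {v}. x u v)" using Claim[of "H - 1"] v unfolding Tsum_def by simp
    then have "x r v \<le> 1 - Tsum x W H b v" using X1'[OF v] by simp
    moreover have "max (x r v) (1 - Tsum x W H b v) = b v" using bfix v unfolding Phi_def by blast
    ultimately show ?thesis by (simp add: max_def)
  qed
  define y where "y v i = (if v = r then (if i = 0 then 1 else 0) else if i = 0 then 0 else Fl x W b (i - 1) v)"
    for v i
  have yW: "y v i = Fl x W b (i - 1) v" if "v \<in> W" "i \<noteq> 0" for v i
    using that Wr unfolding y_def by auto
  have ybnd: "0 \<le> y v i \<and> y v i \<le> 1" if "v \<in> V" "i \<le> H" for v i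
  proof (cases "v = r \<or> i = 0")
    case True then show ?thesis unfolding y_def by auto
  next
    case False
    then have v: "v \<in> W" and i: "i \<noteq> 0" using that unfolding W_def by auto
    have "Fl x W b (i - 1) v \<le> 1 - l v (Suc (i - 1))" using F2[of "i - 1"] that i v by auto
    moreover have "0 \<le> l v (Suc (i - 1))" using bnd that i by auto
    ultimately show ?thesis using yW[OF v i] Fnn[OF v, of "i - 1"] by simp
  qed
  have "in_A V r H x y"
    unfolding in_A_def
  proof (intro conjI ballI allI impI)
    show "arc_constraints V r x" by (rule AC)
    show "y r 0 = 1" unfolding y_def by simp
  next
    fix i assume "i \<in> {1..H}" then show "y r i = 0" unfolding y_def by auto
  next
    fix v assume "v \<in> V - {r}" then show "y v 0 = 0" unfolding y_def by auto
  next
    fix v assume "v \<in> V - {r}"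
    then have v: "v \<in> W" unfolding W_def by simp
    have "(\<Sum>i=1..H. y v i) = (\<Sum>k<H. y v (Suc k))" by (simp add: sum.atLeast1_atMost_eq)
    also have "\<dots> = (\<Sum>k<H. Fl x W b k v)" using yW[OF v] by simp
    also have "\<dots> = (\<Sum>k<Suc (H - 1). Fl x W b k v)" using H0 by simp
    also have "\<dots> = b v + Tsum x W H b v" unfolding Tsum_def sum.lessThan_Suc_shift by simp
    also have "\<dots> = 1" using bval[OF v] by simp
    finally show "(\<Sum>i=1..H. y v i) = 1" .
  next
    fix u v i assume u: "u \<in> V" and v: "v \<in> V - {u}" and i: "i < H"
    show "y u i - y v (i + 1) + x u v \<le> 1"
    proof (cases "u = r")
      case True
      then have vW: "v \<in> W" using v unfolding W_def by auto
      show ?thesis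
      proof (cases "i = 0")
        case True
        have "y v (i + 1) = b v" using yW[OF vW, of 1] True by simp
        moreover have "x r v \<le> b v" using bfix vW unfolding Phi_def by (metis max.cobounded1)
        moreover have "y u i = 1" using \<open>u = r\<close> True unfolding y_def by simp
        ultimately show ?thesis using \<open>u = r\<close> by simp
      next
        case False
        have "0 \<le> y v (i + 1)" using ybnd v i by auto
        then show ?thesis using \<open>u = r\<close> False xr[OF vW] unfolding y_def by simp
      qed
    next
      case False
      then have uW: "u \<in> W" using u unfolding W_def by simp
      show ?thesis
      proof (cases "v = r")
        case True
        have "y u i \<le> 1" using ybnd u i by simp
        then show ?thesis using True xur[OF uW] unfolding y_def by simp
      next
        case False
        then have vW: "v \<in> W" using v unfolding W_def by auto
        show ?thesis
        proof (cases "i = 0")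
          case True
          have "0 \<le> y v (i + 1)" using ybnd v i by auto
          then show ?thesis using True \<open>u \<noteq> r\<close> xuv[of u v] u v unfolding y_def by auto
        next
          case False
          have "Fl x W b (i - 1) u - (1 - x u v) \<le> Fl x W b (Suc (i - 1)) v"
            by (rule Fl_step[OF W]) (use uW v in auto)
          then show ?thesis using yW[OF uW False] yW[OF vW, of "i + 1"] False by simp
        qed
      qed
    qed
  next
    fix u v assume u: "u \<in> V" and v: "v \<in> V - {u}"
    show "y u H + x u v \<le> 1"
    proof (cases "u = r")
      case True
      then show ?thesis using H0 xuv[of u v] u v unfolding y_def by auto
    next
      case False
      then have uW: "u \<in> W" using u unfolding W_def by simp
      show ?thesis
      proof (cases "v = r")
        case True
        then show ?thesis using xur[OF uW] ybnd[OF u] by simp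
      next
        case False
        then have vW: "v \<in> V - {r}" using v by auto
        have "Fl x W b (H - 1) u \<le> 1 - l u (Suc (H - 1))" using F2[of "H - 1"] H0 uW by simp
        moreover have "Suc (H - 1) = H" using H0 by simp
        moreover have "l u H + g H v \<ge> x u v" using cov u v by blast
        moreover have "g H v = 0" using lg vW by blast
        ultimately show ?thesis using yW[OF uW, of H] H0 by simp
      qed
    qed
  next
    fix v i assume "v \<in> V" "i \<le> H"
    then show "0 \<le> y v i" "y v i \<le> 1" using ybnd by auto
  qed
  then show "x \<in> proj_A V r H" unfolding proj_A_def by blast
qed

end
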